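(* Let $k$ and $m$ be positive integers. Then \[ E^{(k)}_{2m}\!\left(\tfrac12,\ldots,\tfrac12,\tfrac{k+1}{2}\right)=\sum_{i=0}^{\lfloor k/2\rfloor}\binom{k}{2i}\sum_{j=0}^i\binom{i}{j}(-1)^j E^{(2j)}_{2m}\!\left(\tfrac12,\ldots,\tfrac12\right), \] and \[ E^{(k)}_{2m+1}\!\left(\tfrac12,\ldots,\tfrac12,\tfrac{k+1}{2}\right)=\sum_{i=0}^{\lfloor k/2\rfloor}\binom{k}{2i+1}\sum_{j=0}^i\binom{i}{j}(-1)^{j} E^{(2j+1)}_{2m+1}\!\left(\tfrac12,\ldots,\tfrac12,1\right). \] Here on the left there are $k-1$ arguments equal to $\tfrac12$ followed by $\tfrac{k+1}{2}$; $E^{(2j)}_{2m}(\tfrac12,\ldots,\tfrac12)$ has all $2j$ arguments equal to $\tfrac12$; and $E^{(2j+1)}_{2m+1}(\tfrac12,\ldots,\tfrac12,1)$ has $2j$ arguments equal to $\tfrac12$ followed by $1$.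
   Context: The Euler polynomials $E_n(x)$ are defined by $\sum_{n\ge0}E_n(x)\frac{t^n}{n!}=\frac{2e^{xt}}{e^t+1}$. For $r\ge 0$ and $m\ge 0$, $E^{(r)}_m(x_1,\ldots,x_r)=\sum_{i_1+\cdots+i_r=m}\binom{m}{i_1,\ldots,i_r}E_{i_1}(x_1)\cdots E_{i_r}(x_r)$, the sum over nonnegative integers $i_1,\dots,i_r$; for $r=0$ this is the empty-product convention $E^{(0)}_m=1$ if $m=0$ and $0$ otherwise. *)

theory Defs
  imports "HOL-Computational_Algebra.Formal_Power_Series"
begin

definition euler_poly :: "nat \<Rightarrow> real \<Rightarrow> real" where
  "euler_poly n x = fact n * fps_nth (fps_const 2 * fps_exp x / (fps_exp 1 + 1)) n"

definition euler_multi :: "nat \<Rightarrow> real list \<Rightarrow> real" where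
  "euler_multi m xs =
     (\<Sum>i\<in>{i \<in> {..<length xs} \<rightarrow>\<^sub>E {..m}. sum i {..<length xs} = m}.
        (fact m / (\<Prod>j<length xs. fact (i j))) * (\<Prod>j<length xs. euler_poly (i j) (xs ! j)))"

end

theory Submission
  imports Defs
begin
unbundle fps_syntax

lemma em_nil: "euler_multi n [] = (if n = 0 then 1 else 0)"
  by (auto simp: euler_multi_def)

lemma em_snoc:
  "euler_multi n (xs @ [x]) =
     (\<Sum>c\<le>n. real (n choose c) * euler_poly c x * euler_multi (n - c) xs)"
proof -
  define L where "L = length xs"
  define S where "S = (\<lambda>b::nat. {i \<in> {..<L} \<rightarrow>\<^sub>E {..b}. sum i {..<L} = b})"
  define T where "T = {i \<in> {..<Suc L} \<rightarrow>\<^sub>E {..n}. sum i {..<Suc L} = n}"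
  define t where "t = (\<lambda>i. (fact n / (\<Prod>j<Suc L. fact (i j))) * (\<Prod>j<Suc L. euler_poly (i j) ((xs @ [x]) ! j)) :: real)"
  have lhs: "euler_multi n (xs @ [x]) = sum t T"
    by (simp add: euler_multi_def L_def T_def t_def)
  have em: "euler_multi b xs = (\<Sum>g\<in>S b. (fact b / (\<Prod>j<L. fact (g j))) * (\<Prod>j<L. euler_poly (g j) (xs ! j)))" for b
    by (simp add: euler_multi_def L_def S_def)
  have "sum t T = (\<Sum>(c,g)\<in>Sigma {..n} (\<lambda>c. S (n - c)). t (g(L := c)))"
  proof (rule sum.reindex_bij_witness[where j = "\<lambda>f. (f L, f(L := undefined))" and i = "\<lambda>(c,g). g(L := c)"])
    fix a assume a: "a \<in> Sigma {..n} (\<lambda>c. S (n - c))"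
    then obtain c g where [simp]: "a = (c, g)" and c: "c \<le> n" and g: "g \<in> S (n - c)" by auto
    have gL: "g L = undefined" using g by (auto simp: S_def PiE_def extensional_def)
    show "((case a of (c, g) \<Rightarrow> g(L := c)) L, (case a of (c, g) \<Rightarrow> g(L := c))(L := undefined)) = a"
      using gL by auto
    have sg: "sum (g(L := c)) {..<Suc L} = c + sum g {..<L}"
      by (simp add: lessThan_Suc)
    have g1: "g \<in> {..<L} \<rightarrow>\<^sub>E {..n - c}" and g2: "sum g {..<L} = n - c"
      using g by (auto simp: S_def)
    have "g(L := c) \<in> {..<Suc L} \<rightarrow>\<^sub>E {..n}"
      unfolding PiE_iff
    proof (intro conjI ballI)
      fix j assume j: "j \<in> {..<Suc L}"
      show "(g(L := c)) j \<in> {..n}"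
      proof (cases "j = L")
        case True thus ?thesis using c by simp
      next
        case False
        hence "j < L" using j by auto
        hence "g j \<le> n - c" using g1 by (auto simp: PiE_iff)
        thus ?thesis using False by simp
      qed
    next
      show "g(L := c) \<in> extensional {..<Suc L}"
        using g1 by (auto simp: PiE_iff extensional_def)
    qed
    moreover have "sum (g(L := c)) {..<Suc L} = n" using sg g2 c by simp
    ultimately show "(case a of (c, g) \<Rightarrow> g(L := c)) \<in> T"
      unfolding T_def by simp
  next
    fix f assume f: "f \<in> T"
    show "(case (f L, f(L := undefined)) of (c, g) \<Rightarrow> g(L := c)) = f" by auto
    show "(case (f L, f(L := undefined)) of (c, g) \<Rightarrow> t (g(L := c))) = t f" by auto
    have sf: "sum f {..<Suc L} = f L + sum f {..<L}" by (simp add: lessThan_Suc)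
    have sf2: "sum (f(L := undefined)) {..<L} = sum f {..<L}" by (rule sum.cong) auto
    have le: "f j \<le> sum f {..<L}" if "j < L" for j
      by (rule member_le_sum) (use that in auto)
    have f1: "f \<in> {..<Suc L} \<rightarrow>\<^sub>E {..n}" and f2: "sum f {..<Suc L} = n"
      using f by (auto simp: T_def)
    have "f(L := undefined) \<in> {..<L} \<rightarrow>\<^sub>E {..n - f L}"
      unfolding PiE_iff
    proof (intro conjI ballI)
      fix j assume j: "j \<in> {..<L}"
      then show "(f(L := undefined)) j \<in> {..n - f L}"
        using le[of j] f2 sf by auto
    next
      show "f(L := undefined) \<in> extensional {..<L}"
        using f1 by (auto simp: PiE_iff extensional_def)
    qed
    moreover have "f L \<le> n" using f2 sf by simp
    ultimately show "(f L, f(L := undefined)) \<in> Sigma {..n} (\<lambda>c. S (n - c))"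
      unfolding S_def using sf sf2 f2 by auto
  qed
  also have "\<dots> = (\<Sum>c\<le>n. \<Sum>g\<in>S (n - c). t (g(L := c)))"
    by (rule sum.Sigma[symmetric]) (auto simp: S_def intro!: finite_Collect_conjI disjI1 finite_PiE)
  also have "\<dots> = (\<Sum>c\<le>n. real (n choose c) * euler_poly c x * euler_multi (n - c) xs)"
  proof (rule sum.cong[OF refl])
    fix c assume c: "c \<in> {..n}"
    have "(\<Sum>g\<in>S (n - c). t (g(L := c))) = (\<Sum>g\<in>S (n - c). real (n choose c) * euler_poly c x *
       ((fact (n - c) / (\<Prod>j<L. fact (g j))) * (\<Prod>j<L. euler_poly (g j) (xs ! j))))"
    proof (rule sum.cong[OF refl])
      fix g assume g: "g \<in> S (n - c)"
      have p1: "(\<Prod>j<Suc L. fact ((g(L := c)) j)) = fact c * (\<Prod>j<L. fact (g j))"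
        by (auto simp: lessThan_Suc intro!: prod.cong)
      have p2: "(\<Prod>j<Suc L. euler_poly ((g(L := c)) j) ((xs @ [x]) ! j)) = euler_poly c x * (\<Prod>j<L. euler_poly (g j) (xs ! j))"
        by (auto simp: lessThan_Suc L_def nth_append intro!: prod.cong)
      have bin: "real (n choose c) = fact n / (fact c * fact (n - c))"
        using c by (simp add: binomial_fact)
      have "(0::real) < (\<Prod>j<L. fact (g j))" by (rule prod_pos) auto
      then show "t (g(L := c)) = real (n choose c) * euler_poly c x *
       ((fact (n - c) / (\<Prod>j<L. fact (g j))) * (\<Prod>j<L. euler_poly (g j) (xs ! j)))"
        unfolding t_def p1 p2 bin by (simp add: field_simps)
    qed
    also have "\<dots> = real (n choose c) * euler_poly c x * euler_multi (n - c) xs"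
      by (simp add: em sum_distrib_left)
    finally show "(\<Sum>g\<in>S (n - c). t (g(L := c))) = real (n choose c) * euler_poly c x * euler_multi (n - c) xs" .
  qed
  finally show ?thesis using lhs by simp
qed


definition G :: "real \<Rightarrow> real fps" where
  "G x = fps_const 2 * fps_exp x / (fps_exp 1 + 1)"

definition F :: "real list \<Rightarrow> real fps" where
  "F xs = Abs_fps (\<lambda>n. euler_multi n xs / fact n)"

lemma em_F: "euler_multi n xs = fact n * F xs $ n"
  by (simp add: F_def)

lemma F_nil: "F [] = 1"
  by (rule fps_ext) (simp add: F_def em_nil)

lemma F_snoc: "F (xs @ [x]) = G x * F xs"
proof (rule fps_ext)
  fix n
  have "F (xs @ [x]) $ n = (\<Sum>c\<le>n. real (n choose c) * euler_poly c x * euler_multi (n - c) xs) / fact n"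
    by (simp add: F_def em_snoc)
  also have "\<dots> = (\<Sum>c\<le>n. G x $ c * F xs $ (n - c))"
    unfolding sum_divide_distrib
  proof (rule sum.cong[OF refl])
    fix c assume c: "c \<in> {..n}"
    have bin: "real (n choose c) = fact n / (fact c * fact (n - c))"
      using c by (simp add: binomial_fact)
    show "real (n choose c) * euler_poly c x * euler_multi (n - c) xs / fact n = G x $ c * F xs $ (n - c)"
      unfolding bin by (simp add: F_def G_def euler_poly_def)
  qed
  also have "\<dots> = (G x * F xs) $ n" by (simp add: fps_mult_nth atLeast0AtMost)
  finally show "F (xs @ [x]) $ n = (G x * F xs) $ n" .
qed

lemma F_list: "F xs = prod_list (map G xs)"
  by (induction xs rule: rev_induct) (simp_all add: F_nil F_snoc mult.commute)

definition E :: "real fps" where "E = fps_exp 1"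
definition I :: "real fps" where "I = inverse (E + 1)"
definition H :: "real fps" where "H = 2 * I"

lemma IE: "I * (E + 1) = 1"
  unfolding I_def by (rule inverse_mult_eq_1) (simp add: E_def)

lemma G_eq: "G x = fps_exp x * H"
proof -
  have "(E + 1) $ 0 \<noteq> 0" by (simp add: E_def)
  then show ?thesis
    unfolding G_def H_def I_def E_def[symmetric]
    by (simp add: fps_divide_unit fps_numeral_fps_const[symmetric] ac_simps)
qed

lemma prod_G: "prod_list (map G xs) = fps_exp (sum_list xs) * H ^ length xs"
  by (induction xs) (simp_all add: G_eq fps_exp_add_mult ac_simps)

lemma F_eq: "F xs = fps_exp (sum_list xs) * H ^ length xs"
  by (simp add: F_list prod_G)

lemma exp_nat: "fps_exp (real n) = E ^ n"
  by (simp add: E_def fps_exp_power_mult)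


definition R :: "real fps \<Rightarrow> real fps" where
  "R f = Abs_fps (\<lambda>n. (-1) ^ n * f $ n)"

lemma R_nth: "R f $ n = (-1) ^ n * f $ n" by (simp add: R_def)

lemma R_mult: "R (f * g) = R f * R g"
proof (rule fps_ext)
  fix n
  have "R (f * g) $ n = (\<Sum>i=0..n. (-1) ^ n * (f $ i * g $ (n - i)))"
    by (simp add: R_nth fps_mult_nth sum_distrib_left)
  also have "\<dots> = (\<Sum>i=0..n. R f $ i * R g $ (n - i))"
  proof (rule sum.cong[OF refl])
    fix i assume "i \<in> {0..n}"
    then have "(-1::real) ^ n = (-1) ^ i * (-1) ^ (n - i)"
      by (simp flip: power_add)
    then show "(-1) ^ n * (f $ i * g $ (n - i)) = R f $ i * R g $ (n - i)"
      by (simp add: R_nth)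
  qed
  also have "\<dots> = (R f * R g) $ n" by (simp add: fps_mult_nth)
  finally show "R (f * g) $ n = (R f * R g) $ n" .
qed

lemma R_add: "R (f + g) = R f + R g"
  by (rule fps_ext) (simp add: R_nth algebra_simps)

lemma R_diff: "R (f - g) = R f - R g"
  by (rule fps_ext) (simp add: R_nth algebra_simps)

lemma R_one: "R 1 = 1"
  by (rule fps_ext) (simp add: R_nth)

lemma R_two: "R 2 = 2"
  by (rule fps_ext) (simp add: R_nth fps_numeral_nth)

lemma R_power: "R (f ^ n) = R f ^ n"
  by (induction n) (simp_all add: R_one R_mult)

lemma R_exp: "R (fps_exp c) = fps_exp (- c)"
  by (rule fps_ext) (simp add: R_nth power_minus[of c])

definition B :: "real fps" where "B = E * H"
definition T :: "real fps" where "T = B - 1"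
definition P :: "real fps" where "P = E * H ^ 2"

lemma E'E: "fps_exp (-1) * E = 1"
  by (simp add: E_def flip: fps_exp_add_mult)

lemma RE: "R E = fps_exp (-1)"
  by (simp add: E_def R_exp)

lemma RI: "R I = E * I"
proof -
  have "R I * (fps_exp (-1) + 1) = 1"
    using arg_cong[OF IE, of R] by (simp add: R_mult R_add R_one E_def R_exp)
  then have "R I * (fps_exp (-1) + 1) * (E * I) = E * I" by simp
  moreover have "R I * (fps_exp (-1) + 1) * (E * I) = R I * ((fps_exp (-1) * E + E) * I)"
    by (simp add: algebra_simps)
  moreover have "(fps_exp (-1) * E + E) * I = 1"
    unfolding E'E using IE by (simp add: algebra_simps)
  ultimately show ?thesis by simp
qed

lemma RT: "R T = - T"
proof -
  have "R T = 2 * (fps_exp (-1) * E) * I - 1"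
    by (simp add: T_def B_def H_def R_diff R_mult R_one R_two RI RE ac_simps)
  also have "\<dots> = 2 * I - 1" by (simp add: E'E)
  also have "\<dots> = 2 * (I * (E + 1)) - 1 - 2 * E * I" by (simp add: algebra_simps)
  also have "\<dots> = - T" unfolding IE by (simp add: T_def B_def H_def algebra_simps)
  finally show ?thesis .
qed

lemma T_parity: "odd (n + j) \<Longrightarrow> (T ^ n) $ j = 0"
proof -
  assume o: "odd (n + j)"
  have "(-1) ^ j * (T ^ n) $ j = ((- T) ^ n) $ j"
    using arg_cong[OF R_power[of T n], of "\<lambda>f. f $ j"] by (simp add: R_nth RT)
  moreover have "((- T) ^ n) $ j = (-1) ^ n * (T ^ n) $ j"
    by (cases "even n") (simp_all add: power_minus_even power_minus_odd)
  ultimately have "(-1) ^ j * (T ^ n) $ j = (-1) ^ n * (T ^ n) $ j" by simp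
  then show ?thesis using o by (cases "even n") auto
qed

lemma P_T: "P = 1 - T ^ 2"
proof -
  have h0: "H * E + H = 2 * (I * (E + 1))" by (simp add: H_def algebra_simps)
  have h: "H * E + H = 2" unfolding h0 IE by simp
  have "P = E * H * (H * E + H) - E ^ 2 * H ^ 2" by (simp add: P_def algebra_simps power2_eq_square)
  also have "\<dots> = E * H * 2 - E ^ 2 * H ^ 2" by (simp add: h)
  also have "\<dots> = 1 - T ^ 2" by (simp add: T_def B_def algebra_simps power2_eq_square)
  finally show ?thesis .
qed


lemma of_nat_nth: "(of_nat c * f) $ n = of_nat c * (f :: real fps) $ n"
  by (simp flip: fps_of_nat)

lemma Bk: "B ^ k = (\<Sum>i\<le>k div 2. of_nat (k choose (2*i)) * T ^ (2*i) + of_nat (k choose (2*i+1)) * T ^ (2*i+1))"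
proof -
  have "B ^ k = (T + 1) ^ k" by (simp add: T_def)
  also have "\<dots> = (\<Sum>n\<le>k. of_nat (k choose n) * T ^ n)"
    by (simp add: binomial_ring)
  also have "\<dots> = (\<Sum>n\<le>Suc (2 * (k div 2)). of_nat (k choose n) * T ^ n)"
    by (rule sum.mono_neutral_left) (auto simp: binomial_eq_0)
  also have "\<dots> = (\<Sum>i\<le>k div 2. of_nat (k choose (2*i)) * T ^ (2*i) + of_nat (k choose (2*i+1)) * T ^ (2*i+1))"
    by (subst sum.in_pairs_0) (simp only: Suc_eq_plus1)
  finally show ?thesis .
qed

lemma Pj: "(\<Sum>j\<le>i. fps_const (real (i choose j) * (-1)^j) * P ^ j) = T ^ (2*i)"
proof -
  have "T ^ (2*i) = (-P + 1) ^ i" by (simp add: P_T power_mult)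
  also have "\<dots> = (\<Sum>j\<le>i. of_nat (i choose j) * (-P) ^ j)" by (subst binomial_ring) (simp only: power_one mult_1_right)
  also have "\<dots> = (\<Sum>j\<le>i. fps_const (real (i choose j) * (-1)^j) * P ^ j)"
  proof (rule sum.cong[OF refl])
    fix j assume "j \<in> {..i}"
    have neg1: "fps_const ((-1::real)^j) = (-1)^j" by (cases "even j") (simp_all add: fps_const_neg[of 1, symmetric])
    have c: "fps_const (real (i choose j) * (-1)^j) = of_nat (i choose j) * (-1)^j"
      by (simp only: fps_const_mult[symmetric] fps_of_nat neg1)
    show "of_nat (i choose j) * (-P) ^ j = fps_const (real (i choose j) * (-1)^j) * P ^ j"
      unfolding c by (simp only: power_minus[of P] mult.assoc)
  qed
  finally show ?thesis by simp
qed

lemma S1: "(\<Sum>j\<le>i. real (i choose j) * (-1)^j * (P ^ j) $ n) = (T ^ (2*i)) $ n"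
  by (simp add: Pj[symmetric] fps_sum_nth)

lemma S2: "(\<Sum>j\<le>i. real (i choose j) * (-1)^j * (P ^ j * B) $ n) = (T ^ (2*i) * B) $ n"
  by (simp add: Pj[symmetric] fps_sum_nth sum_distrib_right mult.assoc)


lemma Fk: "k \<ge> 1 \<Longrightarrow> F (replicate (k - 1) (1/2) @ [(real k + 1) / 2]) = B ^ k"
proof -
  assume k: "k \<ge> 1"
  have s: "sum_list (replicate (k - 1) (1/2) @ [(real k + 1) / 2]) = real k"
    using k by (simp add: sum_list_replicate of_nat_diff field_simps)
  have l: "length (replicate (k - 1) (1/2::real) @ [(real k + 1) / 2]) = k"
    using k by simp
  show ?thesis
    unfolding F_eq s l exp_nat by (simp add: B_def power_mult_distrib)
qed

lemma Fe: "F (replicate (2*j) (1/2)) = P ^ j"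
proof -
  have s: "sum_list (replicate (2*j) (1/2::real)) = real j"
    by (simp add: sum_list_replicate)
  have h: "H ^ (2*j) = (H^2)^j" by (simp add: power_mult)
  show ?thesis
    unfolding F_eq s exp_nat length_replicate h by (simp add: P_def power_mult_distrib)
qed

lemma Fo: "F (replicate (2*j) (1/2) @ [1]) = P ^ j * B"
proof -
  have s: "sum_list (replicate (2*j) (1/2::real) @ [1]) = real (Suc j)"
    by (simp add: sum_list_replicate)
  have l: "length (replicate (2*j) (1/2::real) @ [1]) = Suc (2*j)" by simp
  have h: "H ^ Suc (2*j) = H * (H^2)^j" by (simp add: power_mult)
  have "F (replicate (2*j) (1/2) @ [1]) = (E * E ^ j) * (H * (H^2)^j)"
    unfolding F_eq s l exp_nat h by simp
  also have "\<dots> = P ^ j * B" by (simp add: P_def B_def power_mult_distrib ac_simps)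
  finally show ?thesis .
qed

lemma Bk_nth: "(B ^ k) $ n = (\<Sum>i\<le>k div 2. real (k choose (2*i)) * (T ^ (2*i)) $ n + real (k choose (2*i+1)) * (T ^ (2*i+1)) $ n)"
  unfolding Bk fps_sum_nth fps_add_nth of_nat_nth by simp

lemma inner_even: "(\<Sum>j\<le>i. real (i choose j) * (-1)^j * euler_multi n (replicate (2*j) (1/2))) = fact n * (T ^ (2*i)) $ n"
proof -
  have "(\<Sum>j\<le>i. real (i choose j) * (-1)^j * euler_multi n (replicate (2*j) (1/2)))
      = fact n * (\<Sum>j\<le>i. real (i choose j) * (-1)^j * (P ^ j) $ n)"
    unfolding em_F Fe by (simp add: sum_distrib_left ac_simps)
  then show ?thesis by (simp add: S1)
qed

lemma inner_odd: "(\<Sum>j\<le>i. real (i choose j) * (-1)^j * euler_multi n (replicate (2*j) (1/2) @ [1])) = fact n * (T ^ (2*i) * B) $ n"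
proof -
  have "(\<Sum>j\<le>i. real (i choose j) * (-1)^j * euler_multi n (replicate (2*j) (1/2) @ [1]))
      = fact n * (\<Sum>j\<le>i. real (i choose j) * (-1)^j * (P ^ j * B) $ n)"
    unfolding em_F Fo by (simp add: sum_distrib_left ac_simps)
  then show ?thesis by (simp add: S2)
qed

lemma TB_nth: "(T ^ (2*i) * B) $ n = (T ^ (2*i+1)) $ n + (T ^ (2*i)) $ n"
proof -
  have "T ^ (2*i) * B = T ^ (2*i+1) + T ^ (2*i)"
    by (simp add: T_def algebra_simps)
  then show ?thesis by simp
qed

theorem mainTheorem5:
  fixes k m :: nat
  assumes "k \<ge> 1" and "m \<ge> 1"
  shows "euler_multi (2*m) (replicate (k - 1) (1/2) @ [(real k + 1) / 2]) =
           (\<Sum>i\<le>k div 2. real (k choose (2*i)) *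
              (\<Sum>j\<le>i. real (i choose j) * (-1)^j * euler_multi (2*m) (replicate (2*j) (1/2))))
       \<and> euler_multi (2*m+1) (replicate (k - 1) (1/2) @ [(real k + 1) / 2]) =
           (\<Sum>i\<le>k div 2. real (k choose (2*i+1)) *
              (\<Sum>j\<le>i. real (i choose j) * (-1)^j * euler_multi (2*m+1) (replicate (2*j) (1/2) @ [1])))"
proof
  have z1: "(T ^ (2*i+1)) $ (2*m) = 0" for i by (rule T_parity) simp
  have z2: "(T ^ (2*i)) $ (2*m+1) = 0" for i by (rule T_parity) simp
  show "euler_multi (2*m) (replicate (k - 1) (1/2) @ [(real k + 1) / 2]) =
           (\<Sum>i\<le>k div 2. real (k choose (2*i)) *
              (\<Sum>j\<le>i. real (i choose j) * (-1)^j * euler_multi (2*m) (replicate (2*j) (1/2))))"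
    unfolding inner_even em_F[of _ "replicate (k - 1) (1/2) @ [(real k + 1) / 2]"] Fk[OF assms(1)] Bk_nth z1
    by (simp add: sum_distrib_left ac_simps)
  show "euler_multi (2*m+1) (replicate (k - 1) (1/2) @ [(real k + 1) / 2]) =
           (\<Sum>i\<le>k div 2. real (k choose (2*i+1)) *
              (\<Sum>j\<le>i. real (i choose j) * (-1)^j * euler_multi (2*m+1) (replicate (2*j) (1/2) @ [1])))"
    unfolding inner_odd em_F[of _ "replicate (k - 1) (1/2) @ [(real k + 1) / 2]"] Fk[OF assms(1)] Bk_nth TB_nth z2
    by (simp add: sum_distrib_left ac_simps)
qed

end
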